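(* Let $X$ be a metrizable, locally compact, separable topological space, $T\colon X\to X$ continuous, and $k\in\mathbb N$. Then $h(T^k)=k\,h(T)$.
   Context: For covers $\mathcal A,\mathcal B$ of $X$, $\mathcal A\vee\mathcal B=\{A\cap B: A\in\mathcal A,B\in\mathcal B,A\cap B\neq\emptyset\}$ and, for a map $S$, $\mathcal A^n_S=\mathcal A\vee S^{-1}(\mathcal A)\vee\dots\vee S^{-(n-1)}(\mathcal A)$. $N(\mathcal A)$ is the least cardinality of a subcover of $\mathcal A$. An open cover is admissible if at least one of its elements has compact complement. The topological entropy of a continuous $S\colon X\to X$ is $h(S)=\sup\{\lim_n\frac1n\log N(\mathcal A^n_S): \mathcal A\text{ admissible open cover of }X\}$. *)

theory Defs
  imports "HOL-Analysis.Analysis"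
begin

definition cover_join :: "'a set set \<Rightarrow> 'a set set \<Rightarrow> 'a set set" where
  "cover_join A B = {a \<inter> b | a b. a \<in> A \<and> b \<in> B \<and> a \<inter> b \<noteq> {}}"

definition cover_preimage :: "'a topology \<Rightarrow> ('a \<Rightarrow> 'a) \<Rightarrow> 'a set set \<Rightarrow> 'a set set" where
  "cover_preimage X S A = (\<lambda>U. {x \<in> topspace X. S x \<in> U}) ` A"

text \<open>cover_iter X S A n is A^n_S = A v S^-1 A v ... v S^-(n-1) A (for n >= 1);
  the case n = 0 is the trivial cover.\<close>
fun cover_iter :: "'a topology \<Rightarrow> ('a \<Rightarrow> 'a) \<Rightarrow> 'a set set \<Rightarrow> nat \<Rightarrow> 'a set set" where
  "cover_iter X S A 0 = {topspace X}"
| "cover_iter X S A (Suc n) = cover_join (cover_iter X S A n) (cover_preimage X (S ^^ n) A)"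

definition cover_num :: "'a topology \<Rightarrow> 'a set set \<Rightarrow> nat" where
  "cover_num X A = (LEAST n. \<exists>B \<subseteq> A. finite B \<and> card B = n \<and> topspace X \<subseteq> \<Union>B)"

definition admissible_open_cover :: "'a topology \<Rightarrow> 'a set set \<Rightarrow> bool" where
  "admissible_open_cover X A \<longleftrightarrow>
     (\<forall>U \<in> A. openin X U) \<and> \<Union>A = topspace X \<and>
     (\<exists>U \<in> A. compactin X (topspace X - U))"

definition top_entropy :: "'a topology \<Rightarrow> ('a \<Rightarrow> 'a) \<Rightarrow> ereal" where
  "top_entropy X S = (SUP A \<in> {A. admissible_open_cover X A}.
      ereal (lim (\<lambda>n. ln (real (cover_num X (cover_iter X S A n))) / real n)))"

end

theory Submission
  imports Defs "HOL-Real_Asymp.Real_Asymp"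
begin

lemma fekete:
  fixes u :: "nat \<Rightarrow> real"
  assumes pos: "\<And>n. u n \<ge> 0" and sub: "\<And>m n. u (m+n) \<le> u m + u n"
  shows "(\<lambda>n. u n / real n) \<longlonglongrightarrow> Inf ((\<lambda>n. u n / real n) ` {1..})"
proof -
  define L where "L = Inf ((\<lambda>n. u n / real n) ` {1..})"
  have bdd: "bdd_below ((\<lambda>n. u n / real n) ` {1..})"
    by (rule bdd_belowI[of _ 0]) (use pos in auto)
  have low: "L \<le> u n / real n" if "n \<ge> 1" for n
    unfolding L_def by (rule cInf_lower) (use bdd that in auto)
  have mult: "u (q*m + r) \<le> real q * u m + u r" for q m r
  proof (induction q)
    case 0 then show ?case by simp
  next
    case (Suc q)
    have "u (Suc q * m + r) = u (m + (q*m + r))" by (simp add: algebra_simps)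
    also have "\<dots> \<le> u m + u (q*m+r)" by (rule sub)
    also have "\<dots> \<le> u m + (real q * u m + u r)" using Suc by simp
    finally show ?case by (simp add: algebra_simps)
  qed
  show ?thesis
    unfolding L_def[symmetric]
  proof (rule LIMSEQ_I)
    fix e :: real assume e: "e > 0"
    have "\<exists>m\<in>{1..}. u m / real m < L + e/2"
    proof (rule ccontr)
      assume "\<not> ?thesis"
      hence "\<forall>m\<in>{1..}. L + e/2 \<le> u m / real m" by (auto simp: not_less)
      hence "L + e/2 \<le> L" unfolding L_def
        by (intro cInf_greatest) auto
      with e show False by simp
    qed
    then obtain m where m1: "m \<ge> 1" and um: "u m / real m < L + e/2" by auto
    define B where "B = Max (u ` {..<m})"
    have uB: "u r \<le> B" if "r < m" for r unfolding B_def using that by (intro Max_ge) auto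
    have B0: "B \<ge> 0" using uB[of 0] pos[of 0] m1 by simp
    obtain N where N: "real N > 2 * B / e" using reals_Archimedean2 by blast
    show "\<exists>no. \<forall>n\<ge>no. norm (u n / real n - L) < e"
    proof (intro exI[of _ "Suc N"] allI impI)
      fix n assume n: "n \<ge> Suc N"
      define q r where "q = n div m" and "r = n mod m"
      have nqr: "n = q*m + r" and rm: "r < m" using m1 by (auto simp: q_def r_def)
      have npos: "real n > 0" using n by simp
      have "u n \<le> real q * u m + B" using mult[of q m r] uB[OF rm] nqr by simp
      hence "u n / real n \<le> (real q * u m) / real n + B / real n"
        using npos by (simp add: add_divide_distrib[symmetric] divide_right_mono)
      also have "(real q * u m) / real n \<le> u m / real m"
      proof -
        have "real q * real m \<le> real n" using nqr by (metis le_add1 of_nat_le_iff of_nat_mult)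
        hence "real q * u m * real m \<le> u m * real n"
          using pos[of m] by (metis mult.commute mult_left_mono mult.assoc)
        thus ?thesis using npos m1 by (simp add: divide_simps)
      qed
      also have "B / real n < e/2"
      proof -
        have "real n > 2 * B / e" using N n by simp
        hence "2*B < real n * e" using e by (simp add: divide_simps mult.commute)
        thus ?thesis using npos by (simp add: divide_simps mult.commute)
      qed
      finally have up: "u n / real n < L + e" using um by simp
      have "L \<le> u n / real n" using low n by simp
      thus "norm (u n / real n - L) < e" using up by simp
    qed
  qed
qed

definition itin :: "'a topology \<Rightarrow> ('a\<Rightarrow>'a) \<Rightarrow> (nat \<Rightarrow> 'a set) \<Rightarrow> nat \<Rightarrow> 'a set" where
  "itin X S a n = {x \<in> topspace X. \<forall>i<n. (S^^i) x \<in> a i}"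

definition fincov :: "'a topology \<Rightarrow> 'a set set \<Rightarrow> bool" where
  "fincov X C \<longleftrightarrow> (\<exists>B\<subseteq>C. finite B \<and> topspace X \<subseteq> \<Union>B)"

lemma cover_num_le:
  assumes "B \<subseteq> C" "finite B" "topspace X \<subseteq> \<Union>B"
  shows "cover_num X C \<le> card B"
  unfolding cover_num_def by (rule Least_le) (use assms in blast)

lemma cover_num_attain:
  assumes "fincov X C"
  obtains B where "B \<subseteq> C" "finite B" "card B = cover_num X C" "topspace X \<subseteq> \<Union>B"
proof -
  from assms obtain B where "B \<subseteq> C" "finite B" "topspace X \<subseteq> \<Union>B" unfolding fincov_def by blast
  hence "\<exists>n. \<exists>B \<subseteq> C. finite B \<and> card B = n \<and> topspace X \<subseteq> \<Union>B" by blast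
  from LeastI_ex[OF this] show ?thesis using that unfolding cover_num_def by blast
qed

lemma count_lemma:
  assumes "finite P" "\<And>p. p \<in> P \<Longrightarrow> f p \<noteq> {} \<Longrightarrow> f p \<in> C" "topspace X \<subseteq> \<Union>(f ` P)"
  shows "cover_num X C \<le> card P" "fincov X C"
proof -
  define B where "B = f ` P - {{}}"
  have B1: "B \<subseteq> C" "finite B" using assms unfolding B_def by auto
  have B2: "topspace X \<subseteq> \<Union>B"
  proof
    fix x assume "x \<in> topspace X"
    then obtain p where "p \<in> P" "x \<in> f p" using assms(3) by blast
    thus "x \<in> \<Union>B" unfolding B_def by blast
  qed
  note B = B1 B2
  have "card B \<le> card P" unfolding B_def using assms(1)
    by (meson Diff_subset card_image_le card_mono finite_imageI le_trans)
  thus "cover_num X C \<le> card P" using cover_num_le[OF B] by linarith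
  show "fincov X C" using B unfolding fincov_def by blast
qed

lemma cover_num_empty: "topspace X = {} \<Longrightarrow> cover_num X C = 0"
  using cover_num_le[of "{}" C X] by simp

lemma cover_num_pos: "fincov X C \<Longrightarrow> topspace X \<noteq> {} \<Longrightarrow> cover_num X C \<ge> 1"
proof -
  assume a: "fincov X C" "topspace X \<noteq> {}"
  obtain B where B: "B \<subseteq> C" "finite B" "card B = cover_num X C" "topspace X \<subseteq> \<Union>B"
    using cover_num_attain[OF a(1)] by blast
  have "B \<noteq> {}" using B(4) a(2) by auto
  hence "card B \<noteq> 0" using B(2) by simp
  thus ?thesis using B(3) by simp
qed

lemma iter_char:
  "c \<in> cover_iter X S A n \<longleftrightarrow> (\<exists>a. (\<forall>i<n. a i \<in> A) \<and> c = itin X S a n \<and> (n > 0 \<longrightarrow> c \<noteq> {}))"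
proof (induction n arbitrary: c)
  case 0
  then show ?case by (simp add: itin_def)
next
  case (Suc n)
  show ?case
  proof
    assume "c \<in> cover_iter X S A (Suc n)"
    then obtain c' U where c': "c' \<in> cover_iter X S A n" and U: "U \<in> A"
      and c: "c = c' \<inter> {x \<in> topspace X. (S^^n) x \<in> U}" and ne: "c \<noteq> {}"
      by (auto simp: cover_join_def cover_preimage_def)
    from Suc.IH c' obtain a where a: "\<forall>i<n. a i \<in> A" "c' = itin X S a n" by blast
    have "c = itin X S (a(n:=U)) (Suc n)"
      unfolding c a itin_def by (auto simp: less_Suc_eq)
    thus "\<exists>a. (\<forall>i<Suc n. a i \<in> A) \<and> c = itin X S a (Suc n) \<and> (Suc n > 0 \<longrightarrow> c \<noteq> {})"
      using a U ne by (intro exI[of _ "a(n:=U)"]) (auto simp: less_Suc_eq)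
  next
    assume "\<exists>a. (\<forall>i<Suc n. a i \<in> A) \<and> c = itin X S a (Suc n) \<and> (Suc n > 0 \<longrightarrow> c \<noteq> {})"
    then obtain a where a: "\<forall>i<Suc n. a i \<in> A" "c = itin X S a (Suc n)" "c \<noteq> {}" by blast
    have sub: "c \<subseteq> itin X S a n" unfolding a itin_def by auto
    have ne: "itin X S a n \<noteq> {}" using sub a(3) by blast
    have "\<forall>i<n. a i \<in> A" using a(1) by simp
    hence "itin X S a n \<in> cover_iter X S A n"
      using Suc.IH ne by blast
    moreover have "c = itin X S a n \<inter> {x \<in> topspace X. (S^^n) x \<in> a n}"
      unfolding a itin_def by (auto simp: less_Suc_eq)
    ultimately show "c \<in> cover_iter X S A (Suc n)"
      using a(1,3) unfolding cover_iter.simps cover_join_def cover_preimage_def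
      by (intro CollectI exI[of _ "itin X S a n"] exI[of _ "{x \<in> topspace X. (S^^n) x \<in> a n}"]) auto
  qed
qed

lemma funpow_maps: "S ` topspace X \<subseteq> topspace X \<Longrightarrow> x \<in> topspace X \<Longrightarrow> (S^^i) x \<in> topspace X"
  by (induction i) auto

lemma fincov_iter:
  assumes F: "F \<subseteq> A" "finite F" "topspace X \<subseteq> \<Union>F" and S: "S ` topspace X \<subseteq> topspace X"
  shows "fincov X (cover_iter X S A n)"
proof -
  let ?P = "PiE {..<n} (\<lambda>_. F)"
  have "fincov X (cover_iter X S A n)"
  proof (rule count_lemma(2)[where P = ?P and f = "\<lambda>a. itin X S a n"])
    show "finite ?P" using F by (simp add: finite_PiE)
    show "itin X S a n \<in> cover_iter X S A n" if "a \<in> ?P" "itin X S a n \<noteq> {}" for a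
    proof -
      have "\<forall>i<n. a i \<in> A" using that(1) F(1) by (auto simp: PiE_iff)
      thus ?thesis unfolding iter_char using that(2) by blast
    qed
    show "topspace X \<subseteq> \<Union>((\<lambda>a. itin X S a n) ` ?P)"
    proof
      fix x assume x: "x \<in> topspace X"
      define a where "a i = (if i < n then (SOME U. U \<in> F \<and> (S^^i) x \<in> U) else undefined)" for i
      have ex: "\<exists>U. U \<in> F \<and> (S^^i) x \<in> U" for i using F(3) funpow_maps[OF S x, of i] by blast
      have ai: "a i \<in> F \<and> (S^^i) x \<in> a i" if "i < n" for i
      proof -
        have "(SOME U. U \<in> F \<and> (S^^i) x \<in> U) \<in> F \<and> (S^^i) x \<in> (SOME U. U \<in> F \<and> (S^^i) x \<in> U)"
          by (rule someI_ex[OF ex])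
        thus ?thesis unfolding a_def using that by simp
      qed
      have e: "a \<in> extensional {..<n}" unfolding extensional_def a_def by simp
      have "a \<in> ?P" unfolding PiE_iff using e ai by simp
      moreover have "x \<in> itin X S a n" using ai x by (auto simp: itin_def)
      ultimately show "x \<in> \<Union>((\<lambda>a. itin X S a n) ` ?P)" by blast
    qed
  qed
  thus ?thesis .
qed

lemma adm_fin:
  assumes "admissible_open_cover X A" "U0 \<in> A" "compactin X (topspace X - U0)"
  obtains F where "F \<subseteq> A" "finite F" "U0 \<in> F" "topspace X \<subseteq> \<Union>F"
proof -
  have op: "\<And>U. U \<in> A \<Longrightarrow> openin X U" and un: "\<Union>A = topspace X"
    using assms(1) unfolding admissible_open_cover_def by auto
  have "topspace X - U0 \<subseteq> \<Union>A" using un by simp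
  from compactinD[OF assms(3), of A, OF op this]
  obtain F' where F': "finite F'" "F' \<subseteq> A" "topspace X - U0 \<subseteq> \<Union>F'" by blast
  show ?thesis
  proof (rule that[of "insert U0 F'"])
    show "insert U0 F' \<subseteq> A" using F'(2) assms(2) by blast
    show "finite (insert U0 F')" using F'(1) by simp
    show "U0 \<in> insert U0 F'" by simp
    show "topspace X \<subseteq> \<Union>(insert U0 F')" using F'(3) by blast
  qed
qed

lemma adm_fincov:
  assumes "admissible_open_cover X A" shows "\<exists>F\<subseteq>A. finite F \<and> topspace X \<subseteq> \<Union>F"
proof -
  obtain U0 where "U0 \<in> A" "compactin X (topspace X - U0)" using assms unfolding admissible_open_cover_def by blast
  then obtain F where "F \<subseteq> A" "finite F" "topspace X \<subseteq> \<Union>F"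
    using adm_fin[OF assms] by metis
  thus ?thesis by blast
qed

definition ent :: "'a topology \<Rightarrow> ('a \<Rightarrow> 'a) \<Rightarrow> 'a set set \<Rightarrow> real" where
  "ent X S A = lim (\<lambda>n. ln (real (cover_num X (cover_iter X S A n))) / real n)"

lemma itin_split:
  assumes S: "S ` topspace X \<subseteq> topspace X"
  shows "itin X S a m \<inter> {x \<in> topspace X. (S^^m) x \<in> itin X S b n}
       = itin X S (\<lambda>i. if i < m then a i else b (i - m)) (m + n)"
proof safe
  fix x assume x: "x \<in> itin X S a m" "(S^^m) x \<in> itin X S b n"
  show "x \<in> itin X S (\<lambda>i. if i < m then a i else b (i - m)) (m + n)"
    unfolding itin_def
  proof (safe)
    show "x \<in> topspace X" using x(1) by (simp add: itin_def)
    fix i assume i: "i < m + n"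
    show "(S ^^ i) x \<in> (if i < m then a i else b (i - m))"
    proof (cases "i < m")
      case True thus ?thesis using x(1) by (simp add: itin_def)
    next
      case False
      have "(S^^((i-m)+m)) x = (S^^(i-m)) ((S^^m) x)" by (simp add: funpow_add)
      hence "(S^^i) x = (S^^(i-m)) ((S^^m) x)" using False by simp
      thus ?thesis using x(2) False i by (simp add: itin_def)
    qed
  qed
next
  fix x assume x: "x \<in> itin X S (\<lambda>i. if i < m then a i else b (i - m)) (m + n)"
  hence xt: "x \<in> topspace X" by (simp add: itin_def)
  show "x \<in> itin X S a m" unfolding itin_def
  proof safe
    show "x \<in> topspace X" by (rule xt)
    fix i assume "i < m" thus "(S ^^ i) x \<in> a i" using x by (auto simp: itin_def dest!: spec[of _ i])
  qed
  show "x \<in> topspace X" by (rule xt)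
  show "(S ^^ m) x \<in> itin X S b n" unfolding itin_def
  proof safe
    show "(S ^^ m) x \<in> topspace X" by (rule funpow_maps[OF S xt])
    fix j assume j: "j < n"
    have "(S^^j) ((S^^m) x) = (S^^(m+j)) x" by (simp add: funpow_add add.commute)
    thus "(S^^j) ((S^^m) x) \<in> b j" using x j by (auto simp: itin_def dest!: spec[of _ "m+j"])
  qed
qed

lemma subadd:
  assumes S: "S ` topspace X \<subseteq> topspace X" and A: "F0 \<subseteq> A" "finite F0" "topspace X \<subseteq> \<Union>F0"
  shows "cover_num X (cover_iter X S A (m+n)) \<le> cover_num X (cover_iter X S A m) * cover_num X (cover_iter X S A n)"
proof -
  obtain F where F: "F \<subseteq> cover_iter X S A m" "finite F" "card F = cover_num X (cover_iter X S A m)" "topspace X \<subseteq> \<Union>F"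
    using cover_num_attain[OF fincov_iter[OF A S]] by blast
  obtain G where G: "G \<subseteq> cover_iter X S A n" "finite G" "card G = cover_num X (cover_iter X S A n)" "topspace X \<subseteq> \<Union>G"
    using cover_num_attain[OF fincov_iter[OF A S]] by blast
  define f where "f p = fst p \<inter> {x \<in> topspace X. (S^^m) x \<in> snd p}" for p
  have "cover_num X (cover_iter X S A (m+n)) \<le> card (F \<times> G)"
  proof (rule count_lemma(1)[where f = f])
    show "finite (F \<times> G)" using F G by simp
    show "f p \<in> cover_iter X S A (m+n)" if p: "p \<in> F \<times> G" "f p \<noteq> {}" for p
    proof -
      obtain c d where cd: "p = (c,d)" "c \<in> F" "d \<in> G" using p by auto
      have "c \<in> cover_iter X S A m" using F(1) cd by blast
      then obtain a where a: "\<forall>i<m. a i \<in> A" "c = itin X S a m" unfolding iter_char by blast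
      have "d \<in> cover_iter X S A n" using G(1) cd by blast
      then obtain b where b: "\<forall>i<n. b i \<in> A" "d = itin X S b n" unfolding iter_char by blast
      have "f p = itin X S (\<lambda>i. if i < m then a i else b (i - m)) (m + n)"
        unfolding f_def cd a b by (simp add: itin_split[OF S])
      moreover have "\<forall>i<m+n. (if i < m then a i else b (i - m)) \<in> A" using a b by auto
      ultimately show ?thesis unfolding iter_char using p(2) by (intro exI[of _ "\<lambda>i. if i < m then a i else b (i - m)"]) simp
    qed
    show "topspace X \<subseteq> \<Union>(f ` (F \<times> G))"
    proof
      fix x assume x: "x \<in> topspace X"
      obtain c where c: "c \<in> F" "x \<in> c" using F(4) x by blast
      obtain d where d: "d \<in> G" "(S^^m) x \<in> d" using G(4) funpow_maps[OF S x] by blast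
      have "x \<in> f (c,d)" using c d x by (simp add: f_def)
      thus "x \<in> \<Union>(f ` (F \<times> G))" using c d by blast
    qed
  qed
  thus ?thesis using F G by (simp add: card_cartesian_product)
qed

lemma ent_lim:
  assumes S: "S ` topspace X \<subseteq> topspace X" and A: "F0 \<subseteq> A" "finite F0" "topspace X \<subseteq> \<Union>F0"
  shows "(\<lambda>n. ln (real (cover_num X (cover_iter X S A n))) / real n) \<longlonglongrightarrow> ent X S A"
    and "ent X S A \<ge> 0"
proof -
  define u where "u n = ln (real (cover_num X (cover_iter X S A n)))" for n
  have pos: "u n \<ge> 0" for n unfolding u_def
    by (cases "cover_num X (cover_iter X S A n) = 0") auto
  have sub: "u (m+n) \<le> u m + u n" for m n
  proof (cases "topspace X = {}")
    case True thus ?thesis by (simp add: u_def cover_num_empty)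
  next
    case False
    have p: "cover_num X (cover_iter X S A k) \<ge> 1" for k
      by (rule cover_num_pos[OF fincov_iter[OF A S] False])
    have "real (cover_num X (cover_iter X S A (m+n))) \<le> real (cover_num X (cover_iter X S A m)) * real (cover_num X (cover_iter X S A n))"
      using subadd[OF S A, of m n] by (metis of_nat_le_iff of_nat_mult)
    hence "u (m+n) \<le> ln (real (cover_num X (cover_iter X S A m)) * real (cover_num X (cover_iter X S A n)))"
      unfolding u_def using p[of "m+n"] by (subst ln_le_cancel_iff) auto
    also have "\<dots> = u m + u n" unfolding u_def using p[of m] p[of n] by (simp add: ln_mult)
    finally show ?thesis .
  qed
  from fekete[of u, OF pos sub] have conv: "(\<lambda>n. u n / real n) \<longlonglongrightarrow> Inf ((\<lambda>n. u n / real n) ` {1..})" .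
  hence "ent X S A = Inf ((\<lambda>n. u n / real n) ` {1..})" unfolding ent_def u_def[symmetric] by (rule limI)
  with conv show "(\<lambda>n. ln (real (cover_num X (cover_iter X S A n))) / real n) \<longlonglongrightarrow> ent X S A"
    unfolding u_def by simp
  show "ent X S A \<ge> 0"
  proof (rule LIMSEQ_le_const[OF conv[folded \<open>ent X S A = _\<close>]])
    show "\<exists>N. \<forall>n\<ge>N. 0 \<le> u n / real n" using pos by simp
  qed
qed

lemma ln_nat_nonneg: "ln (real (m::nat)) \<ge> 0"
  by (cases "m = 0") auto

lemma upper_bound:
  assumes T: "T ` topspace X \<subseteq> topspace X" and k: "k \<ge> 1"
    and A: "F0 \<subseteq> A" "finite F0" "topspace X \<subseteq> \<Union>F0"
  shows "ent X (T^^k) A \<le> real k * ent X T A"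
proof -
  have Tk: "(T^^k) ` topspace X \<subseteq> topspace X" using funpow_maps[OF T] by blast
  define u where "u n = ln (real (cover_num X (cover_iter X T A n)))" for n
  define v where "v n = ln (real (cover_num X (cover_iter X (T^^k) A n)))" for n
  have le: "v n \<le> u (n*k)" for n
  proof -
    obtain G where G: "G \<subseteq> cover_iter X T A (n*k)" "finite G" "card G = cover_num X (cover_iter X T A (n*k))" "topspace X \<subseteq> \<Union>G"
      using cover_num_attain[OF fincov_iter[OF A T]] by blast
    define rep where "rep W = (SOME a. (\<forall>i<n*k. a i \<in> A) \<and> W = itin X T a (n*k))" for W
    have rep: "(\<forall>i<n*k. rep W i \<in> A) \<and> W = itin X T (rep W) (n*k)" if "W \<in> G" for W
    proof -
      have "W \<in> cover_iter X T A (n*k)" using that G(1) by blast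
      hence "\<exists>a. (\<forall>i<n*k. a i \<in> A) \<and> W = itin X T a (n*k)" unfolding iter_char by (elim exE conjE) blast
      thus ?thesis unfolding rep_def by (rule someI_ex)
    qed
    define f where "f W = itin X (T^^k) (\<lambda>t. rep W (t*k)) n" for W
    have sub: "W \<subseteq> f W" if "W \<in> G" for W
    proof
      fix x assume x: "x \<in> W"
      hence x': "x \<in> itin X T (rep W) (n*k)" using rep[OF that] by simp
      show "x \<in> f W" unfolding f_def itin_def
      proof safe
        show "x \<in> topspace X" using x' by (simp add: itin_def)
        fix t assume t: "t < n"
        have "t*k < n*k" using t k by simp
        hence "(T^^(t*k)) x \<in> rep W (t*k)" using x' by (auto simp: itin_def)
        moreover have "((T^^k)^^t) x = (T^^(t*k)) x" by (simp add: funpow_mult mult.commute)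
        ultimately show "((T^^k)^^t) x \<in> rep W (t*k)" by simp
      qed
    qed
    have "cover_num X (cover_iter X (T^^k) A n) \<le> card G"
    proof (rule count_lemma(1)[where f = f])
      show "finite G" by (rule G(2))
      show "f W \<in> cover_iter X (T ^^ k) A n" if "W \<in> G" "f W \<noteq> {}" for W
      proof -
        have "\<forall>t<n. rep W (t*k) \<in> A" using rep[OF that(1)] k by auto
        thus ?thesis unfolding iter_char f_def using that(2)[unfolded f_def]
          by (intro exI[of _ "\<lambda>t. rep W (t*k)"]) simp
      qed
      show "topspace X \<subseteq> \<Union>(f ` G)" using G(4) sub by blast
    qed
    hence c: "cover_num X (cover_iter X (T^^k) A n) \<le> cover_num X (cover_iter X T A (n*k))" using G(3) by simp
    show ?thesis
    proof (cases "cover_num X (cover_iter X (T^^k) A n) = 0")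
      case True thus ?thesis unfolding u_def v_def using ln_nat_nonneg by simp
    next
      case False thus ?thesis unfolding u_def v_def using c by simp
    qed
  qed
  have lu: "(\<lambda>n. u n / real n) \<longlonglongrightarrow> ent X T A" unfolding u_def by (rule ent_lim[OF T A])
  have lv: "(\<lambda>n. v n / real n) \<longlonglongrightarrow> ent X (T^^k) A" unfolding v_def by (rule ent_lim[OF Tk A])
  have sm: "strict_mono (\<lambda>n. n * k)" using k by (simp add: strict_mono_def)
  have "(\<lambda>n. u (n*k) / real (n*k)) \<longlonglongrightarrow> ent X T A"
    using LIMSEQ_subseq_LIMSEQ[OF lu sm] by (simp add: o_def)
  hence "(\<lambda>n. real k * (u (n*k) / real (n*k))) \<longlonglongrightarrow> real k * ent X T A"
    by (intro tendsto_mult tendsto_const)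
  moreover have "real k * (u (n*k) / real (n*k)) = u (n*k) / real n" for n
    using k by (simp add: field_simps)
  ultimately have lu2: "(\<lambda>n. u (n*k) / real n) \<longlonglongrightarrow> real k * ent X T A" by simp
  show ?thesis
  proof (rule LIMSEQ_le[OF lv lu2])
    show "\<exists>N. \<forall>n\<ge>N. v n / real n \<le> u (n * k) / real n"
      using le by (intro exI[of _ 0]) (simp add: divide_right_mono)
  qed
qed

lemma ent_id:
  assumes A: "F0 \<subseteq> A" "finite F0" "topspace X \<subseteq> \<Union>F0" and AU: "\<Union>A \<subseteq> topspace X"
  shows "ent X id A = 0"
proof -
  have I: "id ` topspace X \<subseteq> topspace X" by simp
  define u where "u n = ln (real (cover_num X (cover_iter X id A n)))" for n
  have bnd: "u n \<le> ln (real (card F0))" if n: "n \<ge> 1" for n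
  proof -
    have "cover_num X (cover_iter X id A n) \<le> card F0"
    proof (rule count_lemma(1)[where f = "\<lambda>c. c"])
      show "finite F0" by (rule A(2))
      show "c \<in> cover_iter X id A n" if "c \<in> F0" "c \<noteq> {}" for c
      proof -
        have cA: "c \<in> A" using that A(1) by blast
        have e: "(\<forall>i<n. x \<in> c) \<longleftrightarrow> x \<in> c" for x using n by (auto dest: spec[of _ 0])
        have "c = itin X id (\<lambda>_. c) n" unfolding itin_def id_funpow id_apply e using cA AU by auto
        thus ?thesis unfolding iter_char using cA that(2) by (intro exI[of _ "\<lambda>_. c"]) simp
      qed
      show "topspace X \<subseteq> \<Union>((\<lambda>c. c) ` F0)" using A(3) by simp
    qed
    thus ?thesis unfolding u_def using ln_nat_nonneg[of "card F0"]
      by (cases "cover_num X (cover_iter X id A n) = 0") auto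
  qed
  have pos: "u n \<ge> 0" for n unfolding u_def
    by (cases "cover_num X (cover_iter X id A n) = 0") auto
  have "(\<lambda>n. u n / real n) \<longlonglongrightarrow> 0"
  proof (rule tendsto_sandwich[where f = "\<lambda>n. 0" and h = "\<lambda>n. ln (real (card F0)) / real n"])
    show "\<forall>\<^sub>F n in sequentially. 0 \<le> u n / real n" using pos by simp
    show "\<forall>\<^sub>F n in sequentially. u n / real n \<le> ln (real (card F0)) / real n"
      using bnd by (intro eventually_sequentiallyI[of 1]) (simp add: divide_right_mono)
    show "(\<lambda>n. 0) \<longlonglongrightarrow> (0::real)" by simp
    show "(\<lambda>n. ln (real (card F0)) / real n) \<longlonglongrightarrow> 0" by (rule lim_const_over_n)
  qed
  moreover have "(\<lambda>n. u n / real n) \<longlonglongrightarrow> ent X id A" unfolding u_def by (rule ent_lim[OF I A])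
  ultimately show ?thesis using LIMSEQ_unique by blast
qed

lemma funpow_add_apply: "(T^^(a+b)) x = (T^^a) ((T^^b) x)"
  by (simp add: funpow_add)

lemma counting:
  assumes T: "T ` topspace X \<subseteq> topspace X" and k: "k \<ge> 1" and R: "R \<ge> 1"
    and F: "F \<subseteq> A" "finite F" "U0 \<in> F" "topspace X \<subseteq> \<Union>F"
    and U0: "U0 \<subseteq> topspace X"
    and K: "K = topspace X - U0"
    and L: "L = (\<Union>j\<in>{..k*R}. (T^^j) ` K)"
    and E: "E = insert (topspace X - L) (cover_iter X T A k)"
    and fE: "fincov X (cover_iter X (T^^k) E (q*R))"
  shows "cover_num X (cover_iter X T A (q*R*k)) \<le> cover_num X (cover_iter X (T^^k) E (q*R)) * (1 + R * card F ^ k) ^ q"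
proof -
  define n where "n = q*R"
  define D where "D = cover_iter X T A k"
  have KL: "K \<subseteq> L" unfolding L by (intro subset_trans[OF _ UN_upper[of 0]]) auto
  have U0K: "y \<in> U0" if "y \<in> topspace X" "y \<notin> K" for y using that K by blast
  obtain G where G: "G \<subseteq> cover_iter X (T^^k) E n" "finite G" "card G = cover_num X (cover_iter X (T^^k) E n)" "topspace X \<subseteq> \<Union>G"
    using cover_num_attain[OF fE[folded n_def]] by blast
  define repE where "repE W = (SOME e. (\<forall>t<n. e t \<in> E) \<and> W = itin X (T^^k) e n)" for W
  have repE: "(\<forall>t<n. repE W t \<in> E) \<and> W = itin X (T^^k) (repE W) n" if "W \<in> G" for W
  proof -
    have "W \<in> cover_iter X (T^^k) E n" using that G(1) by blast
    hence "\<exists>e. (\<forall>t<n. e t \<in> E) \<and> W = itin X (T^^k) e n" unfolding iter_char by (elim exE conjE) blast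
    thus ?thesis unfolding repE_def by (rule someI_ex)
  qed
  define repD where "repD V = (SOME b. (\<forall>i<k. b i \<in> A) \<and> V = itin X T b k)" for V
  have repD: "(\<forall>i<k. repD V i \<in> A) \<and> V = itin X T (repD V) k" if "V \<in> D" for V
  proof -
    have "\<exists>b. (\<forall>i<k. b i \<in> A) \<and> V = itin X T b k" using that unfolding D_def iter_char by (elim exE conjE) blast
    thus ?thesis unfolding repD_def by (rule someI_ex)
  qed
  define Ch where "Ch = PiE {..<k} (\<lambda>_. F)"
  define Wd where "Wd = insert None (Some ` ({..<R} \<times> Ch))"
  define Pat where "Pat = PiE {..<q} (\<lambda>_. Wd)"
  have finCh: "finite Ch" unfolding Ch_def using F(2) by (simp add: finite_PiE)
  have cardCh: "card Ch = card F ^ k" unfolding Ch_def using F(2) by (simp add: card_PiE)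
  have cardWd: "card Wd = 1 + R * card F ^ k"
    unfolding Wd_def using finCh cardCh by (simp add: card_image card_cartesian_product)
  have finWd: "finite Wd" unfolding Wd_def using finCh by simp
  have cardPat: "card Pat = (1 + R * card F ^ k) ^ q" unfolding Pat_def using cardWd by (simp add: card_PiE)
  have finPat: "finite Pat" unfolding Pat_def using finWd by (simp add: finite_PiE)
  define aseq where "aseq W p s = (let t = s div k; i = s mod k; e = repE W t in
      if e \<in> D then repD e i
      else if i = 0 then U0
      else (case p (t div R) of None \<Rightarrow> U0 | Some (rr, g) \<Rightarrow> if rr = t mod R then g i else U0))" for W p s
  define f where "f Wp = itin X T (aseq (fst Wp) (snd Wp)) (q*R*k)" for Wp
  have "cover_num X (cover_iter X T A (q*R*k)) \<le> card (G \<times> Pat)"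
  proof (rule count_lemma(1)[where f = f])
    show "finite (G \<times> Pat)" using G(2) finPat by simp
    show "f Wp \<in> cover_iter X T A (q*R*k)" if Wp: "Wp \<in> G \<times> Pat" "f Wp \<noteq> {}" for Wp
    proof -
      obtain W p where Wp': "Wp = (W,p)" "W \<in> G" "p \<in> Pat" using Wp(1) by auto
      have "aseq W p s \<in> A" if s: "s < q*R*k" for s
      proof -
        define t where "t = s div k"
        define i where "i = s mod k"
        have t: "t < n" unfolding t_def n_def using s k by (simp add: less_mult_imp_div_less)
        have i: "i < k" unfolding i_def using k by simp
        have eE: "repE W t \<in> E" using repE[OF Wp'(2)] t by blast
        have tw: "t div R < q" using t R unfolding n_def by (simp add: less_mult_imp_div_less)
        have pw: "p (t div R) \<in> Wd" using Wp'(3) tw unfolding Pat_def by (auto simp: PiE_iff)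
        show ?thesis
        proof (cases "repE W t \<in> D")
          case True thus ?thesis unfolding aseq_def Let_def t_def[symmetric] i_def[symmetric]
            using repD[OF True] i by simp
        next
          case False
          show ?thesis
          proof (cases "p (t div R)")
            case None thus ?thesis unfolding aseq_def Let_def t_def[symmetric] i_def[symmetric]
              using False F by auto
          next
            case (Some og)
            then obtain rr g where og: "p (t div R) = Some (rr, g)" "g \<in> Ch" using pw unfolding Wd_def by auto
            have "g i \<in> F" using og(2) i unfolding Ch_def by auto
            thus ?thesis unfolding aseq_def Let_def t_def[symmetric] i_def[symmetric]
              using False F og(1) by auto
          qed
        qed
      qed
      hence "\<forall>s<q*R*k. aseq W p s \<in> A" by blast
      thus ?thesis unfolding iter_char f_def using Wp(2)[unfolded f_def] Wp'(1)
        by (intro exI[of _ "aseq W p"]) simp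
    qed
    show "topspace X \<subseteq> \<Union>(f ` (G \<times> Pat))"
    proof
      fix x assume x: "x \<in> topspace X"
      obtain W where W: "W \<in> G" "x \<in> W" using G(4) x by blast
      have xW: "(T^^(t*k)) x \<in> repE W t" if "t < n" for t
      proof -
        have "x \<in> itin X (T^^k) (repE W) n" using repE[OF W(1)] W(2) by simp
        hence "((T^^k)^^t) x \<in> repE W t" using that by (simp add: itin_def)
        thus ?thesis by (simp add: funpow_mult mult.commute)
      qed
      define lossy where "lossy t \<longleftrightarrow> (T^^(t*k)) x \<notin> L \<and> (\<exists>i. 0 < i \<and> i < k \<and> (T^^(t*k+i)) x \<in> K)" for t
      have gap: "t1 + R < t2" if "lossy t1" "lossy t2" "t1 < t2" for t1 t2
      proof (rule ccontr)
        assume "\<not> t1 + R < t2"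
        hence le: "t2 \<le> t1 + R" by simp
        have "\<exists>i. 0 < i \<and> i < k \<and> (T^^(t1*k+i)) x \<in> K" using that(1) unfolding lossy_def by (rule conjunct2)
        then obtain i where i: "0 < i" "i < k" "(T^^(t1*k+i)) x \<in> K" by (elim exE conjE)
        define j where "j = t2*k - (t1*k+i)"
        have a1: "(t1+1)*k \<le> t2*k" using that(3) by (intro mult_right_mono) auto
        have a2: "t2*k \<le> (t1+R)*k" using le by (intro mult_right_mono) auto
        have "(t1+1)*k = t1*k + k" by (simp add: algebra_simps)
        hence a1': "t1*k + k \<le> t2*k" using a1 by simp
        have "(t1+R)*k = t1*k + k*R" by (simp add: algebra_simps)
        hence a2': "t2*k \<le> t1*k + k*R" using a2 by simp
        have j1: "t2*k = j + (t1*k+i)" unfolding j_def using a1' i(2) by linarith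
        have jM: "j \<le> k*R" unfolding j_def using a2' by linarith
        have "(T^^(t2*k)) x = (T^^j) ((T^^(t1*k+i)) x)" unfolding j1 by (rule funpow_add_apply)
        also have "\<dots> \<in> L" unfolding L using jM i(3) by (intro UN_I[of j] imageI) auto
        finally have "(T^^(t2*k)) x \<in> L" .
        moreover have "(T^^(t2*k)) x \<notin> L" using that(2) unfolding lossy_def by (rule conjunct1)
        ultimately show False by contradiction
      qed
      have uniq: "r1 = r2" if "r1 < R" "r2 < R" "lossy (w*R+r1)" "lossy (w*R+r2)" for w r1 r2
      proof (rule ccontr)
        assume ne: "r1 \<noteq> r2"
        show False
        proof (cases "r1 < r2")
          case True thus False using gap[OF that(3,4)] that(1,2) by simp
        next
          case False hence "r2 < r1" using ne by simp
          thus False using gap[OF that(4,3)] that(1,2) by simp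
        qed
      qed
      have exF: "\<exists>U. U \<in> F \<and> y \<in> U" if "y \<in> topspace X" for y using F(4) that by blast
      define gf where "gf t i = (if i < k then (if (T^^(t*k+i)) x \<in> K then (SOME U. U \<in> F \<and> (T^^(t*k+i)) x \<in> U) else U0) else undefined)" for t i
      have gfF: "gf t i \<in> F \<and> (T^^(t*k+i)) x \<in> gf t i" if "i < k" for t i
      proof (cases "(T^^(t*k+i)) x \<in> K")
        case True
        have y: "(T^^(t*k+i)) x \<in> topspace X" using funpow_maps[OF T x] by blast
        have "(SOME U. U \<in> F \<and> (T^^(t*k+i)) x \<in> U) \<in> F \<and> (T^^(t*k+i)) x \<in> (SOME U. U \<in> F \<and> (T^^(t*k+i)) x \<in> U)"
          by (rule someI_ex[OF exF[OF y]])
        thus ?thesis unfolding gf_def using that True by simp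
      next
        case False
        have y: "(T^^(t*k+i)) x \<in> topspace X" using funpow_maps[OF T x] by blast
        thus ?thesis unfolding gf_def using that False F(3) U0K by simp
      qed
      have gfCh: "gf t \<in> Ch" for t
      proof -
        have "\<forall>i\<in>{..<k}. gf t i \<in> F" using gfF by blast
        moreover have "gf t \<in> extensional {..<k}" unfolding extensional_def gf_def by simp
        ultimately show ?thesis unfolding Ch_def PiE_iff by blast
      qed
      define ow where "ow w = (SOME rr. rr < R \<and> lossy (w*R+rr))" for w
      define p where "p w = (if w < q then (if \<exists>rr<R. lossy (w*R+rr) then Some (ow w, gf (w*R + ow w)) else None) else undefined)" for w
      have ow: "ow w < R \<and> lossy (w*R + ow w)" if "\<exists>rr<R. lossy (w*R+rr)" for w
        unfolding ow_def by (rule someI_ex) (use that in blast)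
      have pPat: "p \<in> Pat"
        unfolding Pat_def PiE_iff
      proof
        show "\<forall>w\<in>{..<q}. p w \<in> Wd"
        proof
          fix w assume w: "w \<in> {..<q}"
          show "p w \<in> Wd"
          proof (cases "\<exists>rr<R. lossy (w*R+rr)")
            case True
            hence "(ow w, gf (w*R + ow w)) \<in> {..<R} \<times> Ch" using ow gfCh by blast
            hence "Some (ow w, gf (w*R + ow w)) \<in> Wd" unfolding Wd_def by blast
            thus ?thesis unfolding p_def using w True by simp
          next
            case False
            have "w < q" using w by simp
            hence "p w = None" unfolding p_def using False by (auto split: if_splits)
            thus ?thesis unfolding Wd_def by simp
          qed
        qed
        show "p \<in> extensional {..<q}" unfolding extensional_def p_def by simp
      qed
      have "x \<in> f (W, p)" unfolding f_def itin_def fst_conv snd_conv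
      proof safe
        show "x \<in> topspace X" by (rule x)
        fix s assume s: "s < q*R*k"
        define t where "t = s div k"
        define i where "i = s mod k"
        have st: "s = t*k + i" unfolding t_def i_def by simp
        have t: "t < n" unfolding t_def n_def using s k by (simp add: less_mult_imp_div_less)
        have i: "i < k" unfolding i_def using k by simp
        have eE: "repE W t \<in> E" using repE[OF W(1)] t by blast
        have y: "(T^^(t*k)) x \<in> repE W t" by (rule xW[OF t])
        have Ts: "(T^^s) x = (T^^i) ((T^^(t*k)) x)" unfolding st by (simp add: funpow_add_apply add.commute)
        have Tsx: "(T^^s) x \<in> topspace X" using funpow_maps[OF T x] by blast
        show "(T^^s) x \<in> aseq W p s"
        proof (cases "repE W t \<in> D")
          case True
          have "(T^^(t*k)) x \<in> itin X T (repD (repE W t)) k" using repD[OF True] y by simp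
          hence "(T^^i) ((T^^(t*k)) x) \<in> repD (repE W t) i" using i by (simp add: itin_def)
          thus ?thesis unfolding aseq_def Let_def t_def[symmetric] i_def[symmetric] Ts using True by simp
        next
          case False
          hence eL: "repE W t = topspace X - L" using eE unfolding E D_def by blast
          hence notL: "(T^^(t*k)) x \<notin> L" using y by blast
          show ?thesis
          proof (cases "i = 0")
            case True
            have "(T^^s) x \<notin> K" using notL KL st True by auto
            hence "(T^^s) x \<in> U0" using U0K Tsx by blast
            thus ?thesis unfolding aseq_def Let_def t_def[symmetric] i_def[symmetric] using False True by simp
          next
            case i0: False
            define w where "w = t div R"
            define rr where "rr = t mod R"
            have two: "t = w*R + rr" unfolding w_def rr_def by simp
            have oR: "rr < R" unfolding rr_def using R by simp
            have wq: "w < q" unfolding w_def using t R unfolding n_def by (simp add: less_mult_imp_div_less)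
            show ?thesis
            proof (cases "lossy t")
              case True
              hence ex: "\<exists>rr<R. lossy (w*R+rr)" using two oR by blast
              have "ow w = rr" using uniq[of "ow w" rr w] ow[OF ex] oR True two by simp
              hence pw: "p w = Some (rr, gf t)" unfolding p_def using wq ex two by simp
              have "(T^^s) x \<in> gf t i" using gfF[OF i] st by simp
              thus ?thesis unfolding aseq_def Let_def t_def[symmetric] i_def[symmetric]
                w_def[symmetric] rr_def[symmetric] using False i0 pw by simp
            next
              case nl: False
              have "(T^^s) x \<notin> K" using nl notL i0 i st unfolding lossy_def by auto
              hence inU0: "(T^^s) x \<in> U0" using U0K Tsx by blast
              show ?thesis
              proof (cases "p w")
                case None thus ?thesis unfolding aseq_def Let_def t_def[symmetric] i_def[symmetric]
                  w_def[symmetric] rr_def[symmetric] using False i0 inU0 by simp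
              next
                case (Some og)
                hence ex: "\<exists>rr<R. lossy (w*R+rr)" unfolding p_def using wq by (auto split: if_splits)
                hence pw: "p w = Some (ow w, gf (w*R + ow w))" unfolding p_def using wq by simp
                have "ow w \<noteq> rr" using ow[OF ex] nl two by auto
                thus ?thesis unfolding aseq_def Let_def t_def[symmetric] i_def[symmetric]
                  w_def[symmetric] rr_def[symmetric] using False i0 inU0 pw by simp
              qed
            qed
          qed
        qed
      qed
      thus "x \<in> \<Union>(f ` (G \<times> Pat))" using W(1) pPat by blast
    qed
  qed
  thus ?thesis using G(3) cardPat G(2) finPat unfolding n_def by (simp add: card_cartesian_product)
qed

lemma cont_funpow: "continuous_map X X T \<Longrightarrow> continuous_map X X (T^^j)"
proof (induction j)
  case 0 thus ?case by (simp add: continuous_map_id id_def[symmetric])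
next
  case (Suc j)
  have "continuous_map X X (T \<circ> (T^^j))" by (rule continuous_map_compose[OF Suc.IH[OF Suc.prems] Suc.prems])
  thus ?case by (simp only: funpow.simps(2))
qed

lemma itin_open:
  assumes T: "continuous_map X X T" and a: "\<And>i. i < n \<Longrightarrow> openin X (a i)"
  shows "openin X (itin X T a n)"
  using a
proof (induction n)
  case 0 thus ?case by (simp add: itin_def)
next
  case (Suc n)
  have eq: "itin X T a (Suc n) = itin X T a n \<inter> {x \<in> topspace X. (T^^n) x \<in> a n}"
    by (auto simp: itin_def less_Suc_eq)
  have "openin X {x \<in> topspace X. (T^^n) x \<in> a n}"
    by (rule openin_continuous_map_preimage[OF cont_funpow[OF T]]) (use Suc.prems in simp)
  moreover have "openin X (itin X T a n)" using Suc by simp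
  ultimately show ?case unfolding eq by (rule openin_Int[rotated])
qed

lemma cont_maps: "continuous_map X X T \<Longrightarrow> T ` topspace X \<subseteq> topspace X"
  by (simp add: continuous_map_image_subset_topspace)

lemma E_adm:
  assumes T: "continuous_map X X T" and H: "Hausdorff_space X"
    and A: "admissible_open_cover X A" and U0: "U0 \<in> A" "compactin X (topspace X - U0)"
    and K: "K = topspace X - U0"
    and L: "L = (\<Union>j\<in>{..M}. (T^^j) ` K)"
    and E: "E = insert (topspace X - L) (cover_iter X T A k)"
  shows "admissible_open_cover X E"
proof -
  have opA: "\<And>U. U \<in> A \<Longrightarrow> openin X U" using A unfolding admissible_open_cover_def by auto
  have cL: "compactin X L" unfolding L
  proof (rule compactin_Union)
    show "finite ((\<lambda>j. (T^^j) ` K) ` {..M})" by simp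
    show "compactin X S" if "S \<in> (\<lambda>j. (T^^j) ` K) ` {..M}" for S
      using that image_compactin[OF U0(2)[folded K] cont_funpow[OF T]] by blast
  qed
  have Ltop: "L \<subseteq> topspace X" using cL by (rule compactin_subset_topspace)
  have oL: "openin X (topspace X - L)"
    by (rule openin_diff[OF openin_topspace compactin_imp_closedin[OF H cL]])
  have opD: "openin X c" if cc: "c \<in> cover_iter X T A k" for c
  proof -
    obtain a where a: "\<forall>i<k. a i \<in> A" "c = itin X T a k" using cc unfolding iter_char by (elim exE conjE) blast
    show ?thesis unfolding a(2) by (rule itin_open[OF T]) (use a(1) opA in blast)
  qed
  obtain F where F: "F \<subseteq> A" "finite F" "topspace X \<subseteq> \<Union>F" using adm_fincov[OF A] by blast
  obtain B where B: "B \<subseteq> cover_iter X T A k" "finite B" "topspace X \<subseteq> \<Union>B"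
    using fincov_iter[OF F cont_maps[OF T], of k] unfolding fincov_def by blast
  have "\<Union>E = topspace X"
  proof
    show "\<Union>E \<subseteq> topspace X" unfolding E using opD openin_subset by blast
    show "topspace X \<subseteq> \<Union>E" unfolding E using B by blast
  qed
  moreover have "\<forall>U\<in>E. openin X U" unfolding E using oL opD by blast
  moreover have "compactin X (topspace X - (topspace X - L))"
    using cL Ltop by (simp add: Diff_Diff_Int Int_absorb1 inf.absorb2)
  ultimately show ?thesis unfolding admissible_open_cover_def E by blast
qed

lemma lower_bound:
  assumes T: "continuous_map X X T" and H: "Hausdorff_space X" and k: "k \<ge> 1" and R: "R \<ge> 1"
    and A: "admissible_open_cover X A" and U0: "U0 \<in> A" "compactin X (topspace X - U0)"
    and F: "F \<subseteq> A" "finite F" "U0 \<in> F" "topspace X \<subseteq> \<Union>F"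
  shows "\<exists>E. admissible_open_cover X E \<and>
     real k * ent X T A \<le> ent X (T^^k) E + ln (1 + real R * real (card F) ^ k) / real R"
proof -
  define K where "K = topspace X - U0"
  define L where "L = (\<Union>j\<in>{..k*R}. (T^^j) ` K)"
  define E where "E = insert (topspace X - L) (cover_iter X T A k)"
  have EA: "admissible_open_cover X E" by (rule E_adm[OF T H A U0 K_def L_def E_def])
  have Tm: "T ` topspace X \<subseteq> topspace X" by (rule cont_maps[OF T])
  have Tkm: "(T^^k) ` topspace X \<subseteq> topspace X" using funpow_maps[OF Tm] by blast
  have U0top: "U0 \<subseteq> topspace X" using A U0(1) unfolding admissible_open_cover_def by blast
  obtain FE where FE: "FE \<subseteq> E" "finite FE" "topspace X \<subseteq> \<Union>FE" using adm_fincov[OF EA] by blast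
  define C where "C = 1 + R * card F ^ k"
  have C1: "C \<ge> 1" unfolding C_def by simp
  have rC: "real C = 1 + real R * real (card F) ^ k" unfolding C_def by simp
  define u where "u s = ln (real (cover_num X (cover_iter X T A s)))" for s
  define v where "v n = ln (real (cover_num X (cover_iter X (T^^k) E n)))" for n
  have cnt: "cover_num X (cover_iter X T A (q*R*k)) \<le> cover_num X (cover_iter X (T^^k) E (q*R)) * C ^ q" for q
    unfolding C_def
    by (rule counting[OF Tm k R F U0top K_def L_def E_def fincov_iter[OF FE Tkm]])
  have ineq: "u (q*R*k) \<le> v (q*R) + real q * ln (real C)" for q
  proof (cases "cover_num X (cover_iter X T A (q*R*k)) = 0")
    case True
    have "v (q*R) \<ge> 0" unfolding v_def by (rule ln_nat_nonneg)
    moreover have "ln (real C) \<ge> 0" using C1 by simp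
    ultimately show ?thesis unfolding u_def using True by simp
  next
    case False
    hence NE: "cover_num X (cover_iter X (T^^k) E (q*R)) \<noteq> 0" using cnt[of q] by (metis mult_0 le_zero_eq)
    have "real (cover_num X (cover_iter X T A (q*R*k))) \<le> real (cover_num X (cover_iter X (T^^k) E (q*R))) * real C ^ q"
      using cnt[of q] by (metis of_nat_le_iff of_nat_mult of_nat_power)
    hence "u (q*R*k) \<le> ln (real (cover_num X (cover_iter X (T^^k) E (q*R))) * real C ^ q)"
      unfolding u_def using False by (subst ln_le_cancel_iff) (use C1 NE in auto)
    also have "\<dots> = v (q*R) + real q * ln (real C)"
      unfolding v_def using NE C1 by (simp add: ln_mult ln_realpow)
    finally show ?thesis .
  qed
  have lu: "(\<lambda>s. u s / real s) \<longlonglongrightarrow> ent X T A"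
    unfolding u_def using F by (intro ent_lim(1)[OF Tm]) auto
  have lv: "(\<lambda>n. v n / real n) \<longlonglongrightarrow> ent X (T^^k) E"
    unfolding v_def by (rule ent_lim(1)[OF Tkm FE])
  have sm1: "strict_mono (\<lambda>q. q*R*k)" using k R by (simp add: strict_mono_def)
  have sm2: "strict_mono (\<lambda>q. q*R)" using R by (simp add: strict_mono_def)
  have l1: "(\<lambda>q. u (q*R*k) / real (q*R*k)) \<longlonglongrightarrow> ent X T A"
    using LIMSEQ_subseq_LIMSEQ[OF lu sm1] by (simp add: o_def)
  have "(\<lambda>q. real k * (u (q*R*k) / real (q*R*k))) \<longlonglongrightarrow> real k * ent X T A"
    by (intro tendsto_mult tendsto_const l1)
  moreover have "real k * (u (q*R*k) / real (q*R*k)) = u (q*R*k) / real (q*R)" for q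
    using k by (simp add: field_simps)
  ultimately have l1': "(\<lambda>q. u (q*R*k) / real (q*R)) \<longlonglongrightarrow> real k * ent X T A" by simp
  have l2: "(\<lambda>q. v (q*R) / real (q*R)) \<longlonglongrightarrow> ent X (T^^k) E"
    using LIMSEQ_subseq_LIMSEQ[OF lv sm2] by (simp add: o_def)
  have l2': "(\<lambda>q. v (q*R) / real (q*R) + ln (real C) / real R) \<longlonglongrightarrow> ent X (T^^k) E + ln (real C) / real R"
    by (intro tendsto_add tendsto_const l2)
  have "real k * ent X T A \<le> ent X (T^^k) E + ln (real C) / real R"
  proof (rule LIMSEQ_le[OF l1' l2'])
    show "\<exists>N. \<forall>q\<ge>N. u (q*R*k) / real (q*R) \<le> v (q*R) / real (q*R) + ln (real C) / real R"
    proof (intro exI[of _ 1] allI impI)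
      fix q :: nat assume q: "q \<ge> 1"
      have pos: "real (q*R) > 0" using q R by simp
      have "u (q*R*k) / real (q*R) \<le> (v (q*R) + real q * ln (real C)) / real (q*R)"
        using ineq[of q] pos by (simp add: divide_right_mono)
      also have "\<dots> = v (q*R) / real (q*R) + ln (real C) / real R"
        using q R by (simp add: field_simps)
      finally show "u (q*R*k) / real (q*R) \<le> v (q*R) / real (q*R) + ln (real C) / real R" .
    qed
  qed
  thus ?thesis using EA rC by auto
qed

lemma lim_cR: "(\<lambda>R::nat. ln (1 + real R * B) / real R) \<longlonglongrightarrow> 0" if "B \<ge> 0" for B :: real
proof (cases "B = 0")
  case True thus ?thesis by simp
next
  case False
  hence "B > 0" using that by simp
  thus ?thesis by real_asymp
qed

lemma eps_conclude:
  fixes h :: ereal and x :: real and c :: "nat \<Rightarrow> real"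
  assumes le: "\<And>R. R \<ge> 1 \<Longrightarrow> ereal x \<le> h + ereal (c R)" and c: "c \<longlonglongrightarrow> 0" and h0: "h \<ge> 0"
  shows "ereal x \<le> h"
proof (cases h)
  case (real r)
  have "x \<le> r + c R" if "R \<ge> 1" for R using le[OF that] real by simp
  moreover have "(\<lambda>R. r + c R) \<longlonglongrightarrow> r + 0" by (intro tendsto_add tendsto_const c)
  ultimately have "x \<le> r" using LIMSEQ_le_const[of "\<lambda>R. r + c R" "r + 0" x] by auto
  thus ?thesis using real by simp
next
  case PInf thus ?thesis by simp
next
  case MInf thus ?thesis using h0 by simp
qed

theorem corollary3p4:
  fixes X :: "'a topology" and T :: "'a \<Rightarrow> 'a" and k :: nat
  assumes "metrizable_space X" and "locally_compact_space X" and "separable_space X"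
    and "continuous_map X X T"
  shows "top_entropy X (T ^^ k) = ereal (real k) * top_entropy X T"
proof -
  note T = assms(4)
  have H: "Hausdorff_space X" by (rule metrizable_imp_Hausdorff_space[OF assms(1)])
  have Tm: "T ` topspace X \<subseteq> topspace X" by (rule cont_maps[OF T])
  have te: "top_entropy X S = (SUP A \<in> {A. admissible_open_cover X A}. ereal (ent X S A))" for S
    unfolding top_entropy_def ent_def by simp
  have ne: "{A. admissible_open_cover X A} \<noteq> {}"
  proof -
    have "admissible_open_cover X {topspace X}" unfolding admissible_open_cover_def by auto
    thus ?thesis by blast
  qed
  have fc: "\<exists>F\<subseteq>A. finite F \<and> topspace X \<subseteq> \<Union>F" if "admissible_open_cover X A" for A
    by (rule adm_fincov[OF that])
  have entpos: "ent X S A \<ge> 0" if "admissible_open_cover X A" "S ` topspace X \<subseteq> topspace X" for A S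
    using fc[OF that(1)] ent_lim(2)[OF that(2)] by blast
  have hpos: "top_entropy X S \<ge> 0" if "S ` topspace X \<subseteq> topspace X" for S
  proof -
    obtain A where "admissible_open_cover X A" using ne by blast
    hence "ereal (ent X S A) \<le> top_entropy X S" unfolding te by (intro SUP_upper) auto
    moreover have "ent X S A \<ge> 0" by (rule entpos[OF \<open>admissible_open_cover X A\<close> that])
    ultimately show ?thesis using order_trans[of 0 "ereal (ent X S A)"] by simp
  qed
  show ?thesis
  proof (cases "k = 0")
    case True
    have "top_entropy X (T^^k) = 0"
    proof -
      have "ent X id A = 0" if Aa: "admissible_open_cover X A" for A
      proof -
        obtain F where "F \<subseteq> A" "finite F" "topspace X \<subseteq> \<Union>F" using fc[OF Aa] by blast
        moreover have "\<Union>A \<subseteq> topspace X" using Aa unfolding admissible_open_cover_def by blast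
        ultimately show ?thesis by (rule ent_id)
      qed
      hence "top_entropy X id = (SUP A \<in> {A. admissible_open_cover X A}. ereal 0)"
        unfolding te by (intro SUP_cong) auto
      also have "\<dots> = 0" using ne by simp
      finally show ?thesis using True by simp
    qed
    thus ?thesis using True by simp
  next
    case False
    hence k: "k \<ge> 1" by simp
    have Tkm: "(T^^k) ` topspace X \<subseteq> topspace X" using funpow_maps[OF Tm] by blast
    show ?thesis
    proof (rule antisym)
      show "top_entropy X (T^^k) \<le> ereal (real k) * top_entropy X T"
        unfolding te[of "T^^k"]
      proof (rule SUP_least)
        fix A assume A: "A \<in> {A. admissible_open_cover X A}"
        have "\<exists>F\<subseteq>A. finite F \<and> topspace X \<subseteq> \<Union>F" using A by (intro fc) simp
        then obtain F where F: "F \<subseteq> A" "finite F" "topspace X \<subseteq> \<Union>F" by (elim exE conjE)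
        have "ent X (T^^k) A \<le> real k * ent X T A" by (rule upper_bound[OF Tm k F])
        hence "ereal (ent X (T^^k) A) \<le> ereal (real k * ent X T A)" by (simp only: ereal_less_eq(3))
        also have "\<dots> = ereal (real k) * ereal (ent X T A)" by (simp only: times_ereal.simps(1))
        also have "\<dots> \<le> ereal (real k) * top_entropy X T"
        proof (rule ereal_mult_left_mono)
          show "ereal (ent X T A) \<le> top_entropy X T" unfolding te using A by (intro SUP_upper) auto
        qed simp
        finally show "ereal (ent X (T^^k) A) \<le> ereal (real k) * top_entropy X T" .
      qed
      have "ereal (real k) * top_entropy X T = (SUP A \<in> {A. admissible_open_cover X A}. ereal (real k) * ereal (ent X T A))"
      proof (unfold te, rule SUP_ereal_mult_left[symmetric])
        show "{A. admissible_open_cover X A} \<noteq> {}" by (rule ne)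
        show "0 \<le> ereal (ent X T A)" if "A \<in> {A. admissible_open_cover X A}" for A
          using entpos[of A T] that Tm by simp
        show "0 \<le> ereal (real k)" by simp
      qed
      also have "\<dots> \<le> top_entropy X (T^^k)"
      proof (rule SUP_least)
        fix A assume A: "A \<in> {A. admissible_open_cover X A}"
        hence Aa: "admissible_open_cover X A" by simp
        obtain U0 where U0: "U0 \<in> A" "compactin X (topspace X - U0)" using Aa unfolding admissible_open_cover_def by blast
        obtain F where F: "F \<subseteq> A" "finite F" "U0 \<in> F" "topspace X \<subseteq> \<Union>F" by (rule adm_fin[OF Aa U0])
        define c where "c R = ln (1 + real R * real (card F) ^ k) / real R" for R :: nat
        have "ereal (real k * ent X T A) \<le> top_entropy X (T^^k) + ereal (c R)" if R: "R \<ge> 1" for R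
        proof -
          obtain E where E: "admissible_open_cover X E"
            "real k * ent X T A \<le> ent X (T^^k) E + c R"
            using lower_bound[OF T H k R Aa U0 F] unfolding c_def by blast
          have le1: "ereal (ent X (T^^k) E) \<le> top_entropy X (T^^k)" unfolding te using E(1) by (intro SUP_upper) auto
          have "ereal (ent X (T^^k) E + c R) = ereal (ent X (T^^k) E) + ereal (c R)" by simp
          also have "\<dots> \<le> top_entropy X (T^^k) + ereal (c R)" using le1 by (rule add_right_mono)
          finally have "ereal (ent X (T^^k) E + c R) \<le> top_entropy X (T^^k) + ereal (c R)" .
          moreover have "ereal (real k * ent X T A) \<le> ereal (ent X (T^^k) E + c R)" using E(2) by simp
          ultimately show ?thesis by (rule order_trans[rotated])
        qed
        moreover have "c \<longlonglongrightarrow> 0" unfolding c_def by (rule lim_cR) simp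
        ultimately have "ereal (real k * ent X T A) \<le> top_entropy X (T^^k)"
          using eps_conclude hpos[OF Tkm] by blast
        thus "ereal (real k) * ereal (ent X T A) \<le> top_entropy X (T^^k)" by simp
      qed
      finally show "ereal (real k) * top_entropy X T \<le> top_entropy X (T^^k)" .
    qed
  qed
qed

end
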